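(* Let $G$ be a graph and $t$ a positive integer. Then $\operatorname{th}_{\operatorname{H}}(G)\leq t$ if and only if there exist integers $a\geq 1$ and $b\geq 0$ with $a+b=t$ such that $G$ is isomorphic to a graph obtained from $K_a\,\square\,\overline{K_{b+1}}$ by a sequence of operations, each of which is either identifying an empty pair or deleting a complete edge.
   Context: All graphs are finite, simple and undirected. $K_a\,\square\,\overline{K_{b+1}}$ has vertex set $\{(i,j):1\leq i\leq a,\ 1\leq j\leq b+1\}$, with $(i,j)$ adjacent to $(i',j')$ iff $j=j'$ and $i\neq i'$ (each column $j$ induces a $K_a$, each row $i$ is an independent set); these edges are the complete edges. An empty pair is a pair of vertices $\{(i,j),(i,j+1)\}$ lying in the same row and in adjacent columns (tracked through the operations). Identifying an empty pair replaces its two vertices by a single vertex whose neighborhood is the union of their neighborhoods (discarding loops and multiple edges); deleting a complete edge removes one complete edge. Hopping color change rule: a blue vertex $v$ may force a white vertex $w$ to become blue if $v$ has not previously performed a force and every neighbor of $v$ is blue. For an initial blue set $B$, a chronological list of forces of $B$ is a sequence of such forces applied one at a time until no further force is possible; its underlying unordered set is a set of forces of $B$. $B$ is a hopping forcing set if some chronological list of forces of $B$ turns all vertices blue. For a set of forces $\mathcal F$ of $B$, let $\mathcal F^{(0)}=B$ and for $t\geq1$ let $\mathcal F^{(t)}$ be the set of vertices $w\notin U_{t-1}:=\bigcup_{i=0}^{t-1}\mathcal F^{(i)}$ for which there is $(v\to w)\in\mathcal F$ with $v\in U_{t-1}$ and all neighbors of $v$ in $U_{t-1}$. $\operatorname{pt}_{\operatorname{H}}(G;\mathcal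 F)$ is the least $t$ with $\bigcup_{i=0}^t\mathcal F^{(i)}=V(G)$ ($\infty$ if none); $\operatorname{pt}_{\operatorname{H}}(G;B)$ is the minimum over sets of forces $\mathcal F$ of $B$ ($\infty$ if $B$ is not a hopping forcing set). $\operatorname{th}_{\operatorname{H}}(G)=\min_{B\subseteq V(G)}\big(|B|+\operatorname{pt}_{\operatorname{H}}(G;B)\big)$. *)

theory Defs
  imports Main "HOL-Library.Extended_Nat"
begin

text \<open>A graph is given by a vertex set V and a set E of ordered pairs
(each undirected edge is stored in both orientations).\<close>

definition simple_graph :: "'a set \<Rightarrow> ('a \<times> 'a) set \<Rightarrow> bool" where
  "simple_graph V E \<longleftrightarrow> finite V \<and> E \<subseteq> V \<times> V \<and> sym E \<and> (\<forall>v. (v, v) \<notin> E)"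

definition nbrs :: "('a \<times> 'a) set \<Rightarrow> 'a \<Rightarrow> 'a set" where
  "nbrs E v = {u. (v, u) \<in> E}"

definition graph_iso :: "'a set \<Rightarrow> ('a \<times> 'a) set \<Rightarrow> 'b set \<Rightarrow> ('b \<times> 'b) set \<Rightarrow> bool" where
  "graph_iso V E W F \<longleftrightarrow> (\<exists>f. bij_betw f V W \<and>
      (\<forall>u\<in>V. \<forall>v\<in>V. (u, v) \<in> E \<longleftrightarrow> (f u, f v) \<in> F))"

definition blue_after :: "'a set \<Rightarrow> ('a \<times> 'a) list \<Rightarrow> nat \<Rightarrow> 'a set" where
  "blue_after B fs k = B \<union> snd ` set (take k fs)"

text \<open>v may force w when the current blue set is U and the vertices that have already
forced are those in P.\<close>
definition hop_force_ok :: "'a set \<Rightarrow> ('a \<times> 'a) set \<Rightarrow> 'a set \<Rightarrow> 'a set \<Rightarrow> 'a \<Rightarrow> 'a \<Rightarrow> bool" where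
  "hop_force_ok V E U P v w \<longleftrightarrow>
     v \<in> V \<and> v \<in> U \<and> w \<in> V \<and> w \<notin> U \<and> v \<notin> P \<and> nbrs E v \<subseteq> U"

definition hop_chron_list :: "'a set \<Rightarrow> ('a \<times> 'a) set \<Rightarrow> 'a set \<Rightarrow> ('a \<times> 'a) list \<Rightarrow> bool" where
  "hop_chron_list V E B fs \<longleftrightarrow>
     (\<forall>k < length fs. hop_force_ok V E (blue_after B fs k) (fst ` set (take k fs))
                        (fst (fs ! k)) (snd (fs ! k))) \<and>
     \<not> (\<exists>v w. hop_force_ok V E (blue_after B fs (length fs)) (fst ` set fs) v w)"

definition hop_set_of_forces :: "'a set \<Rightarrow> ('a \<times> 'a) set \<Rightarrow> 'a set \<Rightarrow> ('a \<times> 'a) set \<Rightarrow> bool" where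
  "hop_set_of_forces V E B F \<longleftrightarrow> (\<exists>fs. hop_chron_list V E B fs \<and> F = set fs)"

definition hop_forcing_set :: "'a set \<Rightarrow> ('a \<times> 'a) set \<Rightarrow> 'a set \<Rightarrow> bool" where
  "hop_forcing_set V E B \<longleftrightarrow> (\<exists>fs. hop_chron_list V E B fs \<and> blue_after B fs (length fs) = V)"

text \<open>hop_upto V E B F t is the union of the layers F^(0), ..., F^(t).\<close>
primrec hop_upto :: "'a set \<Rightarrow> ('a \<times> 'a) set \<Rightarrow> 'a set \<Rightarrow> ('a \<times> 'a) set \<Rightarrow> nat \<Rightarrow> 'a set" where
  "hop_upto V E B F 0 = B"
| "hop_upto V E B F (Suc t) = hop_upto V E B F t \<union>
     {w. w \<notin> hop_upto V E B F t \<and>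
         (\<exists>v. (v, w) \<in> F \<and> v \<in> hop_upto V E B F t \<and> nbrs E v \<subseteq> hop_upto V E B F t)}"

definition pt_H_forces :: "'a set \<Rightarrow> ('a \<times> 'a) set \<Rightarrow> 'a set \<Rightarrow> ('a \<times> 'a) set \<Rightarrow> enat" where
  "pt_H_forces V E B F =
     (if \<exists>t. hop_upto V E B F t = V then enat (LEAST t. hop_upto V E B F t = V) else \<infinity>)"

definition pt_H :: "'a set \<Rightarrow> ('a \<times> 'a) set \<Rightarrow> 'a set \<Rightarrow> enat" where
  "pt_H V E B =
     (if hop_forcing_set V E B
      then (INF F \<in> {F. hop_set_of_forces V E B F}. pt_H_forces V E B F)
      else \<infinity>)"

definition th_H :: "'a set \<Rightarrow> ('a \<times> 'a) set \<Rightarrow> enat" where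
  "th_H V E = (INF B \<in> Pow V. enat (card B) + pt_H V E B)"

text \<open>Vertices of the current graph are the sets of grid positions (i,j) that have been
identified into them (this realises the tracking of empty pairs and complete edges).\<close>

definition grid_vertices :: "nat \<Rightarrow> nat \<Rightarrow> (nat \<times> nat) set set" where
  "grid_vertices a b = {{(i, j)} | i j. 1 \<le> i \<and> i \<le> a \<and> 1 \<le> j \<and> j \<le> b + 1}"

definition grid_edges :: "nat \<Rightarrow> nat \<Rightarrow> ((nat \<times> nat) set \<times> (nat \<times> nat) set) set" where
  "grid_edges a b = {({(i, j)}, {(i', j)}) | i i' j.
       1 \<le> i \<and> i \<le> a \<and> 1 \<le> i' \<and> i' \<le> a \<and> i \<noteq> i' \<and> 1 \<le> j \<and> j \<le> b + 1}"

definition merge_map :: "'v set \<Rightarrow> 'v set \<Rightarrow> 'v set \<Rightarrow> 'v set" where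
  "merge_map X Y Z = (if Z = X \<or> Z = Y then X \<union> Y else Z)"

inductive grid_reach :: "nat \<Rightarrow> nat \<Rightarrow> (nat \<times> nat) set set \<Rightarrow>
    ((nat \<times> nat) set \<times> (nat \<times> nat) set) set \<Rightarrow> bool" for a b where
  start: "grid_reach a b (grid_vertices a b) (grid_edges a b)"
| identify: "\<lbrakk> grid_reach a b VS ES; X \<in> VS; Y \<in> VS; X \<noteq> Y; (i, j) \<in> X; (i, j + 1) \<in> Y \<rbrakk>
    \<Longrightarrow> grid_reach a b (insert (X \<union> Y) (VS - {X, Y}))
          {(merge_map X Y P, merge_map X Y Q) | P Q. (P, Q) \<in> ES \<and> merge_map X Y P \<noteq> merge_map X Y Q}"
| delete: "\<lbrakk> grid_reach a b VS ES; (X, Y) \<in> ES \<rbrakk>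
    \<Longrightarrow> grid_reach a b VS (ES - {(X, Y), (Y, X)})"

end

theory Submission
  imports Defs
begin


definition blk :: "nat \<Rightarrow> nat \<Rightarrow> nat \<Rightarrow> (nat \<times> nat) set" where
  "blk i s e = {(i, c) | c. s \<le> c \<and> c \<le> e}"

definition grid_pos :: "nat \<Rightarrow> nat \<Rightarrow> (nat \<times> nat) set" where
  "grid_pos a b = {(i, c). 1 \<le> i \<and> i \<le> a \<and> 1 \<le> c \<and> c \<le> b + 1}"

definition row_part :: "nat \<Rightarrow> nat \<Rightarrow> (nat \<times> nat) set set \<Rightarrow> bool" where
  "row_part a b VS \<longleftrightarrow>
     (\<forall>P\<in>VS. \<exists>i s e. P = blk i s e \<and> 1 \<le> i \<and> i \<le> a \<and> 1 \<le> s \<and> s \<le> e \<and> e \<le> b + 1) \<and>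
     (\<forall>P\<in>VS. \<forall>Q\<in>VS. P \<noteq> Q \<longrightarrow> P \<inter> Q = {}) \<and> \<Union>VS = grid_pos a b"

definition adj :: "(nat \<times> nat) set \<Rightarrow> (nat \<times> nat) set \<Rightarrow> bool" where
  "adj P Q \<longleftrightarrow> (\<exists>i i' c. (i, c) \<in> P \<and> (i', c) \<in> Q \<and> i \<noteq> i')"

definition adjE :: "(nat \<times> nat) set set \<Rightarrow> ((nat \<times> nat) set \<times> (nat \<times> nat) set) set" where
  "adjE VS = {(P, Q). P \<in> VS \<and> Q \<in> VS \<and> P \<noteq> Q \<and> adj P Q}"

lemma mem_blk[simp]: "(x, y) \<in> blk i s e \<longleftrightarrow> x = i \<and> s \<le> y \<and> y \<le> e"
  by (auto simp: blk_def)

lemma merge_sub: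
  assumes "ES \<subseteq> adjE VS" "X \<in> VS" "Y \<in> VS"
  shows "{(merge_map X Y P, merge_map X Y Q) | P Q. (P, Q) \<in> ES \<and> merge_map X Y P \<noteq> merge_map X Y Q}
         \<subseteq> adjE (insert (X \<union> Y) (VS - {X, Y}))"
proof
  fix z assume "z \<in> {(merge_map X Y P, merge_map X Y Q) | P Q. (P, Q) \<in> ES \<and> merge_map X Y P \<noteq> merge_map X Y Q}"
  then obtain P Q where z: "z = (merge_map X Y P, merge_map X Y Q)" "(P, Q) \<in> ES"
     "merge_map X Y P \<noteq> merge_map X Y Q" by blast
  then have pq: "P \<in> VS" "Q \<in> VS" "adj P Q" using assms(1) by (auto simp: adjE_def)
  have sub: "P \<subseteq> merge_map X Y P" "Q \<subseteq> merge_map X Y Q" by (auto simp: merge_map_def)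
  have "adj (merge_map X Y P) (merge_map X Y Q)" using pq(3) sub unfolding adj_def by blast
  moreover have "merge_map X Y P \<in> insert (X \<union> Y) (VS - {X, Y})"
     "merge_map X Y Q \<in> insert (X \<union> Y) (VS - {X, Y})" using pq by (auto simp: merge_map_def)
  ultimately show "z \<in> adjE (insert (X \<union> Y) (VS - {X, Y}))" using z by (auto simp: adjE_def)
qed


lemma mem_mergeI:
  "(P, Q) \<in> ES \<Longrightarrow> merge_map X Y P = P' \<Longrightarrow> merge_map X Y Q = Q' \<Longrightarrow> P' \<noteq> Q' \<Longrightarrow>
   (P', Q') \<in> {(merge_map X Y P, merge_map X Y Q) | P Q. (P, Q) \<in> ES \<and> merge_map X Y P \<noteq> merge_map X Y Q}"
  by blast

lemma merge_eq:
  assumes "X \<in> VS" "Y \<in> VS"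
  shows "{(merge_map X Y P, merge_map X Y Q) | P Q. (P, Q) \<in> adjE VS \<and> merge_map X Y P \<noteq> merge_map X Y Q}
         = adjE (insert (X \<union> Y) (VS - {X, Y}))" (is "?L = ?R")
proof
  show "?L \<subseteq> ?R" using merge_sub[OF _ assms] by blast
next
  show "?R \<subseteq> ?L"
  proof
    fix z assume z: "z \<in> ?R"
    then obtain P' Q' where pq: "z = (P', Q')" "P' \<in> insert (X \<union> Y) (VS - {X, Y})"
      "Q' \<in> insert (X \<union> Y) (VS - {X, Y})" "P' \<noteq> Q'" "adj P' Q'" unfolding adjE_def by blast
    then obtain i i' c where w: "(i, c) \<in> P'" "(i', c) \<in> Q'" "i \<noteq> i'" unfolding adj_def by blast
    have mm: "\<And>R. R \<in> VS - {X, Y} \<Longrightarrow> merge_map X Y R = R" by (auto simp: merge_map_def)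
    have mX: "merge_map X Y X = X \<union> Y" "merge_map X Y Y = X \<union> Y" by (auto simp: merge_map_def)
    show "z \<in> ?L" unfolding pq(1)
    proof (cases "P' = X \<union> Y")
      case True
      then have Q': "Q' \<in> VS - {X, Y}" using pq by auto
      from w(1) True obtain P where P: "P \<in> {X, Y}" "(i, c) \<in> P" by auto
      have "P \<noteq> Q'" using P Q' by auto
      then have a: "(P, Q') \<in> adjE VS" using P Q' w assms unfolding adjE_def adj_def by blast
      have b: "merge_map X Y P = P'" using P True mX by auto
      have c: "merge_map X Y Q' = Q'" using mm Q' by auto
      show "(P', Q') \<in> ?L" by (rule mem_mergeI[OF a b c pq(4)])
    next
      case False
      then have P': "P' \<in> VS - {X, Y}" using pq by auto
      show "(P', Q') \<in> ?L"
      proof (cases "Q' = X \<union> Y")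
        case True
        from w(2) True obtain Q where Q: "Q \<in> {X, Y}" "(i', c) \<in> Q" by auto
        have "P' \<noteq> Q" using Q P' by auto
        then have a: "(P', Q) \<in> adjE VS" using Q P' w assms unfolding adjE_def adj_def by blast
        have b: "merge_map X Y Q = Q'" using Q True mX by auto
        have c: "merge_map X Y P' = P'" using mm P' by auto
        show ?thesis by (rule mem_mergeI[OF a c b pq(4)])
      next
        case False
        then have Q': "Q' \<in> VS - {X, Y}" using pq by auto
        have a: "(P', Q') \<in> adjE VS" using P' Q' pq unfolding adjE_def by blast
        show ?thesis by (rule mem_mergeI[OF a mm[OF P'] mm[OF Q'] pq(4)])
      qed
    qed
  qed
qed

lemma blk_single: "{(i, j)} = blk i j j" by (auto simp: blk_def)

lemma row_part_start: "row_part a b (grid_vertices a b)"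
  unfolding row_part_def
proof (intro conjI)
  show "\<forall>P\<in>grid_vertices a b. \<exists>i s e. P = blk i s e \<and> 1 \<le> i \<and> i \<le> a \<and> 1 \<le> s \<and> s \<le> e \<and> e \<le> b + 1"
    unfolding grid_vertices_def using blk_single by fastforce
  show "\<forall>P\<in>grid_vertices a b. \<forall>Q\<in>grid_vertices a b. P \<noteq> Q \<longrightarrow> P \<inter> Q = {}"
    unfolding grid_vertices_def by blast
  show "\<Union> (grid_vertices a b) = grid_pos a b"
    unfolding grid_vertices_def grid_pos_def by blast
qed

lemma edges_start: "grid_edges a b \<subseteq> adjE (grid_vertices a b)"
  unfolding grid_edges_def adjE_def grid_vertices_def adj_def by blast

lemma row_partD:
  assumes "row_part a b VS"
  shows "\<And>P. P \<in> VS \<Longrightarrow> \<exists>i s e. P = blk i s e \<and> 1 \<le> i \<and> i \<le> a \<and> 1 \<le> s \<and> s \<le> e \<and> e \<le> b + 1"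
    and "\<And>P Q. P \<in> VS \<Longrightarrow> Q \<in> VS \<Longrightarrow> P \<noteq> Q \<Longrightarrow> P \<inter> Q = {}"
    and "\<Union>VS = grid_pos a b"
  using assms unfolding row_part_def by blast+

lemma row_part_merge:
  assumes rp: "row_part a b VS" and XY: "X \<in> VS" "Y \<in> VS" "X \<noteq> Y" "(i, j) \<in> X" "(i, j + 1) \<in> Y"
  shows "row_part a b (insert (X \<union> Y) (VS - {X, Y}))"
proof -
  note r1 = row_partD(1)[OF rp] and d = row_partD(2)[OF rp] and r3 = row_partD(3)[OF rp]
  obtain i1 s1 e1 where X: "X = blk i1 s1 e1" "1 \<le> i1" "i1 \<le> a" "1 \<le> s1" "s1 \<le> e1" "e1 \<le> b + 1"
    using r1[OF XY(1)] by blast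
  obtain i2 s2 e2 where Y: "Y = blk i2 s2 e2" "1 \<le> i2" "i2 \<le> a" "1 \<le> s2" "s2 \<le> e2" "e2 \<le> b + 1"
    using r1[OF XY(2)] by blast
  have disj: "X \<inter> Y = {}" using d XY by blast
  have i: "i1 = i" "i2 = i" "s1 \<le> j" "j \<le> e1" "s2 \<le> j + 1" "j + 1 \<le> e2"
    using XY(4,5) unfolding X(1) Y(1) by auto
  have "e1 = j"
  proof (rule ccontr)
    assume "e1 \<noteq> j" then have "(i, j + 1) \<in> X" using X i by auto
    then show False using disj XY by blast
  qed
  moreover have "s2 = j + 1"
  proof (rule ccontr)
    assume "s2 \<noteq> j + 1" then have "(i, j) \<in> Y" using Y i by auto
    then show False using disj XY by blast
  qed
  ultimately have U: "X \<union> Y = blk i s1 e2" unfolding X(1) Y(1) i(1,2) using i(3,6) by (auto simp: blk_def)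
  have p1: "\<forall>P\<in>insert (X \<union> Y) (VS - {X, Y}). \<exists>i s e. P = blk i s e \<and> 1 \<le> i \<and> i \<le> a \<and> 1 \<le> s \<and> s \<le> e \<and> e \<le> b + 1"
  proof
    fix P assume "P \<in> insert (X \<union> Y) (VS - {X, Y})"
    then consider "P = X \<union> Y" | "P \<in> VS" by blast
    then show "\<exists>i s e. P = blk i s e \<and> 1 \<le> i \<and> i \<le> a \<and> 1 \<le> s \<and> s \<le> e \<and> e \<le> b + 1"
    proof cases
      case 1
      have "1 \<le> i" "i \<le> a" "1 \<le> s1" "s1 \<le> e2" "e2 \<le> b + 1" using X Y i by auto
      then show ?thesis unfolding 1 U by blast
    next
      case 2 then show ?thesis by (rule r1)
    qed
  qed
  have p2: "\<forall>P\<in>insert (X \<union> Y) (VS - {X, Y}). \<forall>Q\<in>insert (X \<union> Y) (VS - {X, Y}). P \<noteq> Q \<longrightarrow> P \<inter> Q = {}"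
  proof -
    have "\<And>P. P \<in> VS - {X, Y} \<Longrightarrow> P \<inter> (X \<union> Y) = {}"
    proof -
      fix P assume "P \<in> VS - {X, Y}"
      then have "P \<inter> X = {}" "P \<inter> Y = {}" using d XY(1,2) by auto
      then show "P \<inter> (X \<union> Y) = {}" by blast
    qed
    then have e: "\<And>P. P \<in> VS - {X, Y} \<Longrightarrow> P \<inter> (X \<union> Y) = {} \<and> (X \<union> Y) \<inter> P = {}" by blast
    show ?thesis
    proof (intro ballI impI)
      fix P Q assume "P \<in> insert (X \<union> Y) (VS - {X, Y})" "Q \<in> insert (X \<union> Y) (VS - {X, Y})" "P \<noteq> Q"
      then consider "P = X \<union> Y" "Q \<in> VS - {X, Y}" | "Q = X \<union> Y" "P \<in> VS - {X, Y}" | "P \<in> VS" "Q \<in> VS" by blast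
      then show "P \<inter> Q = {}"
      proof cases
        case 1 then show ?thesis using e by blast
      next
        case 2 then show ?thesis using e by blast
      next
        case 3 then show ?thesis using d \<open>P \<noteq> Q\<close> by blast
      qed
    qed
  qed
  have p3: "\<Union> (insert (X \<union> Y) (VS - {X, Y})) = grid_pos a b"
  proof -
    have "\<Union> (insert (X \<union> Y) (VS - {X, Y})) = \<Union>VS" using XY(1,2) by blast
    then show ?thesis using r3 by simp
  qed
  show ?thesis unfolding row_part_def using p1 p2 p3 by blast
qed

lemma reach_inv:
  assumes "grid_reach a b VS ES"
  shows "row_part a b VS \<and> ES \<subseteq> adjE VS"
  using assms
proof induction
  case start
  then show ?case using row_part_start edges_start by blast
next
  case (identify VS ES X Y i j)
  have "row_part a b VS" "ES \<subseteq> adjE VS" using identify.IH by auto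
  then show ?case using row_part_merge[OF _ identify.hyps(2-6)] merge_sub[OF _ identify.hyps(2,3)] by simp
next
  case (delete VS ES X Y)
  then show ?case by auto
qed

lemma finite_grid_pos: "finite (grid_pos a b)"
proof -
  have "grid_pos a b \<subseteq> {1..a} \<times> {1..b+1}" unfolding grid_pos_def by auto
  then show ?thesis by (rule finite_subset) auto
qed

lemma row_part_finite: "row_part a b VS \<Longrightarrow> finite VS"
  using row_partD(3) finite_grid_pos finite_UnionD by metis

lemma reach_finite_ES: "grid_reach a b VS ES \<Longrightarrow> finite ES"
proof -
  assume r: "grid_reach a b VS ES"
  then have "row_part a b VS" "ES \<subseteq> adjE VS" using reach_inv by auto
  then have "finite VS" "ES \<subseteq> VS \<times> VS" using row_part_finite unfolding adjE_def by auto
  then show "finite ES" using finite_subset by blast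
qed

lemma reach_del_aux:
  "\<forall>ES. grid_reach a b VS ES \<longrightarrow> E' \<subseteq> ES \<longrightarrow> sym E' \<longrightarrow> card (ES - E') \<le> n \<longrightarrow> grid_reach a b VS E'"
proof (induction n)
  case 0
  show ?case
  proof (intro allI impI)
    fix ES assume r: "grid_reach a b VS ES" and s: "E' \<subseteq> ES" "sym E'" "card (ES - E') \<le> 0"
    have "finite (ES - E')" using reach_finite_ES[OF r] by auto
    then have "ES = E'" using s by auto
    then show "grid_reach a b VS E'" using r by simp
  qed
next
  case (Suc n)
  show ?case
  proof (intro allI impI)
    fix ES assume r: "grid_reach a b VS ES" and s: "E' \<subseteq> ES" "sym E'" "card (ES - E') \<le> Suc n"
    have fin: "finite (ES - E')" using reach_finite_ES[OF r] by auto
    show "grid_reach a b VS E'"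
    proof (cases "ES - E' = {}")
      case True then have "ES = E'" using s by auto
      then show ?thesis using r by simp
    next
      case False
    then obtain X Y where xy: "(X, Y) \<in> ES - E'" by auto
    have yx: "(Y, X) \<notin> E'" using xy s(2) unfolding sym_def by blast
    let ?ES = "ES - {(X, Y), (Y, X)}"
    have r2: "grid_reach a b VS ?ES" using r xy by (intro grid_reach.delete) auto
    have s2: "E' \<subseteq> ?ES" using s xy yx by auto
    have "?ES - E' \<subseteq> (ES - E') - {(X, Y)}" using yx by auto
    then have "card (?ES - E') \<le> card ((ES - E') - {(X, Y)})" using fin by (intro card_mono) auto
    also have "\<dots> = card (ES - E') - 1" using xy fin by simp
    finally have "card (?ES - E') \<le> n" using s(3) by linarith
    then show "grid_reach a b VS E'" using Suc.IH r2 s2 s(2) by blast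
    qed
  qed
qed

lemma reach_del: "grid_reach a b VS ES \<Longrightarrow> E' \<subseteq> ES \<Longrightarrow> sym E' \<Longrightarrow> grid_reach a b VS E'"
  using reach_del_aux by blast

lemma card_blk: "card (blk i s e) = e + 1 - s"
proof -
  have "blk i s e = (\<lambda>c. (i, c)) ` {s..e}" by (auto simp: blk_def)
  moreover have "inj_on (\<lambda>c. (i, c)) {s..e}" by (auto simp: inj_on_def)
  ultimately show ?thesis by (simp add: card_image)
qed

definition mu :: "(nat \<times> nat) set set \<Rightarrow> nat" where
  "mu VS = (\<Sum>P\<in>VS. card P - 1)"

lemma reach_part_base:
  assumes rp: "row_part a b VS" and m: "mu VS = 0"
  shows "grid_reach a b VS (adjE VS)"
proof -
  note r1 = row_partD(1)[OF rp] and d = row_partD(2)[OF rp] and r3 = row_partD(3)[OF rp]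
  have fin: "finite VS" using row_part_finite[OF rp] .
  have c: "\<And>P. P \<in> VS \<Longrightarrow> card P - 1 = 0" using m fin unfolding mu_def by simp
  have sing: "\<And>P. P \<in> VS \<Longrightarrow> \<exists>i j. P = {(i, j)} \<and> 1 \<le> i \<and> i \<le> a \<and> 1 \<le> j \<and> j \<le> b + 1"
  proof -
    fix P assume P: "P \<in> VS"
    obtain i s e where b: "P = blk i s e" "1 \<le> i" "i \<le> a" "1 \<le> s" "s \<le> e" "e \<le> b + 1"
      using r1[OF P] by blast
    have "e + 1 - s - 1 = 0" using c[OF P] unfolding b(1) card_blk .
    then have "s = e" using b by simp
    then have "P = {(i, s)}" using b by (auto simp: blk_def)
    then show "\<exists>i j. P = {(i, j)} \<and> 1 \<le> i \<and> i \<le> a \<and> 1 \<le> j \<and> j \<le> b + 1" using b \<open>s = e\<close> by blast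
  qed
  have V: "VS = grid_vertices a b"
  proof
    show "VS \<subseteq> grid_vertices a b" using sing unfolding grid_vertices_def by blast
    show "grid_vertices a b \<subseteq> VS"
    proof
      fix P assume "P \<in> grid_vertices a b"
      then obtain i j where P: "P = {(i, j)}" "(i, j) \<in> grid_pos a b"
        unfolding grid_vertices_def grid_pos_def by blast
      then obtain Q where Q: "Q \<in> VS" "(i, j) \<in> Q" using r3 by blast
      then obtain i' j' where "Q = {(i', j')}" using sing by blast
      then show "P \<in> VS" using P Q by auto
    qed
  qed
  have "adjE (grid_vertices a b) = grid_edges a b"
    unfolding adjE_def grid_vertices_def grid_edges_def adj_def by auto
  then show ?thesis using V grid_reach.start by simp
qed

lemma reach_part_aux:
  "\<forall>VS. row_part a b VS \<longrightarrow> mu VS = n \<longrightarrow> grid_reach a b VS (adjE VS)"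
proof (induction n)
  case 0
  then show ?case using reach_part_base by blast
next
  case (Suc n)
  show ?case
  proof (intro allI impI)
    fix VS assume rp: "row_part a b VS" and m: "mu VS = Suc n"
    note r1 = row_partD(1)[OF rp] and d = row_partD(2)[OF rp] and r3 = row_partD(3)[OF rp]
    have fin: "finite VS" using row_part_finite[OF rp] .
    obtain P where P: "P \<in> VS" "card P - 1 \<noteq> 0"
      using m fin unfolding mu_def by (metis nat.distinct(1) sum.neutral)
    obtain i s e where b: "P = blk i s e" "1 \<le> i" "i \<le> a" "1 \<le> s" "s \<le> e" "e \<le> b + 1"
      using r1[OF P(1)] by blast
    have se: "s < e" using P(2) b card_blk[of i s e] by auto
    define X where "X = blk i s (e - 1)"
    define Y where "Y = blk i e e"
    have XYP: "X \<union> Y = P" using b se unfolding X_def Y_def by (auto simp: blk_def)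
    have XY0: "X \<inter> Y = {}" "(i, s) \<in> X" "(i, e) \<in> Y" using se unfolding X_def Y_def by auto
    then have XY: "X \<inter> Y = {}" "X \<noteq> Y" "X \<noteq> {}" "Y \<noteq> {}" by blast+
    have notin: "X \<notin> VS - {P}" "Y \<notin> VS - {P}"
    proof -
      show "X \<notin> VS - {P}"
      proof
        assume "X \<in> VS - {P}" then have "X \<inter> P = {}" using d P(1) by blast
        then show False using XYP XY by blast
      qed
      show "Y \<notin> VS - {P}"
      proof
        assume "Y \<in> VS - {P}" then have "Y \<inter> P = {}" using d P(1) by blast
        then show False using XYP XY by blast
      qed
    qed
    define VS' where "VS' = insert X (insert Y (VS - {P}))"
    have rp': "row_part a b VS'"
      unfolding row_part_def
    proof (intro conjI)
      show "\<forall>Q\<in>VS'. \<exists>i s e. Q = blk i s e \<and> 1 \<le> i \<and> i \<le> a \<and> 1 \<le> s \<and> s \<le> e \<and> e \<le> b + 1"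
      proof
        fix Q assume "Q \<in> VS'"
        then consider "Q = X" | "Q = Y" | "Q \<in> VS" unfolding VS'_def by blast
        then show "\<exists>i s e. Q = blk i s e \<and> 1 \<le> i \<and> i \<le> a \<and> 1 \<le> s \<and> s \<le> e \<and> e \<le> b + 1"
        proof cases
          case 1
          have "1 \<le> i" "i \<le> a" "1 \<le> s" "s \<le> e - 1" "e - 1 \<le> b + 1" using b se by auto
          then show ?thesis unfolding 1 X_def by blast
        next
          case 2
          have "1 \<le> i" "i \<le> a" "1 \<le> e" "e \<le> e" "e \<le> b + 1" using b se by auto
          then show ?thesis unfolding 2 Y_def by blast
        next
          case 3 then show ?thesis by (rule r1)
        qed
      qed
      have sub: "X \<subseteq> P" "Y \<subseteq> P" using XYP by auto
      have e: "\<And>Q. Q \<in> VS - {P} \<Longrightarrow> Q \<inter> X = {} \<and> X \<inter> Q = {} \<and> Q \<inter> Y = {} \<and> Y \<inter> Q = {}"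
      proof -
        fix Q assume "Q \<in> VS - {P}"
        then have "Q \<inter> P = {}" using d P(1) by blast
        then show "Q \<inter> X = {} \<and> X \<inter> Q = {} \<and> Q \<inter> Y = {} \<and> Y \<inter> Q = {}" using sub by blast
      qed
      show "\<forall>Q\<in>VS'. \<forall>R\<in>VS'. Q \<noteq> R \<longrightarrow> Q \<inter> R = {}"
      proof (intro ballI impI)
        fix Q R assume QR: "Q \<in> VS'" "R \<in> VS'" "Q \<noteq> R"
        consider "Q \<in> {X, Y}" "R \<in> {X, Y}" | "Q \<in> {X, Y}" "R \<in> VS - {P}" | "R \<in> {X, Y}" "Q \<in> VS - {P}"
          | "Q \<in> VS - {P}" "R \<in> VS - {P}" using QR(1,2) unfolding VS'_def by blast
        then show "Q \<inter> R = {}"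
        proof cases
          case 1 then show ?thesis using XY QR(3) by blast
        next
          case 2 then show ?thesis using e by blast
        next
          case 3 then show ?thesis using e by blast
        next
          case 4 then show ?thesis using d QR(3) by blast
        qed
      qed
      have "\<Union>VS' = \<Union>VS" unfolding VS'_def using XYP P(1) by blast
      then show "\<Union>VS' = grid_pos a b" using r3 by simp
    qed
    have "mu VS = (card P - 1) + mu (VS - {P})" unfolding mu_def using fin P(1) by (rule sum.remove)
    moreover have "mu VS' = (card X - 1) + ((card Y - 1) + mu (VS - {P}))"
      unfolding mu_def VS'_def using fin notin XY(2) by simp
    moreover have "card P - 1 = e - s" "card X - 1 = e - s - 1" "card Y - 1 = 0"
      unfolding b(1) X_def Y_def card_blk using se by auto
    ultimately have "mu VS' = n" using m se by simp
    then have r': "grid_reach a b VS' (adjE VS')" using Suc.IH rp' by blast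
    have inX: "(i, e - 1) \<in> X" "(i, e - 1 + 1) \<in> Y" using se unfolding X_def Y_def by auto
    have XYin: "X \<in> VS'" "Y \<in> VS'" unfolding VS'_def by auto
    have "grid_reach a b (insert (X \<union> Y) (VS' - {X, Y}))
      {(merge_map X Y P, merge_map X Y Q) | P Q. (P, Q) \<in> adjE VS' \<and> merge_map X Y P \<noteq> merge_map X Y Q}"
      by (rule grid_reach.identify[OF r' XYin XY(2) inX])
    moreover have "insert (X \<union> Y) (VS' - {X, Y}) = VS"
    proof -
      have "VS' - {X, Y} = VS - {P}" unfolding VS'_def using notin XY(2) by blast
      then show ?thesis using XYP P(1) by auto
    qed
    ultimately show "grid_reach a b VS (adjE VS)" using merge_eq[OF XYin] by simp
  qed
qed

lemma reach_part: "row_part a b VS \<Longrightarrow> grid_reach a b VS (adjE VS)"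
  using reach_part_aux by blast



lemma th_le: "B \<subseteq> V \<Longrightarrow> th_H V E \<le> enat (card B) + pt_H V E B"
  unfolding th_H_def by (rule INF_lower) simp

lemma pt_le:
  assumes "hop_chron_list V E B fs" "blue_after B fs (length fs) = V"
  shows "pt_H V E B \<le> pt_H_forces V E B (set fs)"
proof -
  have "hop_forcing_set V E B" using assms unfolding hop_forcing_set_def by blast
  moreover have "hop_set_of_forces V E B (set fs)" using assms(1) unfolding hop_set_of_forces_def by blast
  ultimately show ?thesis unfolding pt_H_def by (simp add: INF_lower)
qed

lemma ptf_le: "hop_upto V E B F n = V \<Longrightarrow> pt_H_forces V E B F \<le> enat n"
  unfolding pt_H_forces_def by (auto intro: Least_le)

lemma hop_upto_mono_add: "hop_upto V E B F t \<subseteq> hop_upto V E B F (t + d)"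
  by (induction d) auto

lemma hop_upto_mono: "t \<le> t' \<Longrightarrow> hop_upto V E B F t \<subseteq> hop_upto V E B F t'"
  using hop_upto_mono_add by (metis le_add_diff_inverse)

lemma chron_ok:
  fixes \<kappa> :: "'a \<times> 'a \<Rightarrow> nat"
  assumes so: "sorted (map \<kappa> fs)" and d1: "distinct (map fst fs)" and d2: "distinct (map snd fs)"
    and inV: "\<forall>p\<in>set fs. fst p \<in> V \<and> snd p \<in> V \<and> snd p \<notin> B"
    and bl: "\<forall>p\<in>set fs. fst p \<in> B \<union> {snd q | q. q \<in> set fs \<and> \<kappa> q < \<kappa> p}"
    and nb: "\<forall>p\<in>set fs. nbrs E (fst p) \<subseteq> B \<union> {snd q | q. q \<in> set fs \<and> \<kappa> q < \<kappa> p}"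
    and all: "B \<union> snd ` set fs = V"
  shows "hop_chron_list V E B fs"
  unfolding hop_chron_list_def
proof (intro conjI allI impI)
  fix k assume k: "k < length fs"
  let ?p = "fs ! k"
  have pin: "?p \<in> set fs" using k by simp
  have sub: "{snd q | q. q \<in> set fs \<and> \<kappa> q < \<kappa> ?p} \<subseteq> snd ` set (take k fs)"
  proof
    fix x assume "x \<in> {snd q | q. q \<in> set fs \<and> \<kappa> q < \<kappa> ?p}"
    then obtain q where q: "x = snd q" "q \<in> set fs" "\<kappa> q < \<kappa> ?p" by blast
    then obtain j where j: "j < length fs" "q = fs ! j" by (auto simp: in_set_conv_nth)
    have "j < k"
    proof (rule ccontr)
      assume "\<not> j < k"
      then have "map \<kappa> fs ! k \<le> map \<kappa> fs ! j" using sorted_nth_mono[OF so, of k j] j by simp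
      then show False using q j k by simp
    qed
    then have "q \<in> set (take k fs)" using j by (auto simp: in_set_conv_nth intro: exI[of _ j])
    then show "x \<in> snd ` set (take k fs)" using q by blast
  qed
  have U: "blue_after B fs k = B \<union> snd ` set (take k fs)" unfolding blue_after_def ..
  have w1: "snd ?p \<notin> snd ` set (take k fs)"
  proof
    assume "snd ?p \<in> snd ` set (take k fs)"
    then obtain j where j: "j < k" "snd (fs ! j) = snd ?p" by (auto simp: in_set_conv_nth)
    then have "map snd fs ! j = map snd fs ! k" using k by simp
    then show False using nth_eq_iff_index_eq[OF d2, of j k] j k by simp
  qed
  have v1: "fst ?p \<notin> fst ` set (take k fs)"
  proof
    assume "fst ?p \<in> fst ` set (take k fs)"
    then obtain j where j: "j < k" "fst (fs ! j) = fst ?p" by (auto simp: in_set_conv_nth)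
    then have "map fst fs ! j = map fst fs ! k" using k by simp
    then show False using nth_eq_iff_index_eq[OF d1, of j k] j k by simp
  qed
  show "hop_force_ok V E (blue_after B fs k) (fst ` set (take k fs)) (fst ?p) (snd ?p)"
    unfolding hop_force_ok_def U
    using inV pin bl nb sub w1 v1 by blast
next
  show "\<not> (\<exists>v w. hop_force_ok V E (blue_after B fs (length fs)) (fst ` set fs) v w)"
    using all unfolding hop_force_ok_def blue_after_def by auto
qed

lemma hop_upto_sub: "B \<subseteq> V \<Longrightarrow> F \<subseteq> V \<times> V \<Longrightarrow> hop_upto V E B F t \<subseteq> V"
  by (induction t) auto

lemma backward:
  assumes sg: "simple_graph V E" and rp: "row_part a b VS" and es: "ES \<subseteq> adjE VS"
    and iso: "graph_iso V E VS ES"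
  shows "th_H V E \<le> enat (a + b)"
proof -
  obtain f where bij: "bij_betw f V VS" and ed: "\<forall>u\<in>V. \<forall>v\<in>V. (u, v) \<in> E \<longleftrightarrow> (f u, f v) \<in> ES"
    using iso unfolding graph_iso_def by blast
  have EV: "E \<subseteq> V \<times> V" and finV: "finite V" using sg unfolding simple_graph_def by auto
  have "\<forall>v\<in>V. \<exists>T. f v = blk (fst T) (fst (snd T)) (snd (snd T)) \<and> 1 \<le> fst T \<and> fst T \<le> a \<and>
          1 \<le> fst (snd T) \<and> fst (snd T) \<le> snd (snd T) \<and> snd (snd T) \<le> b + 1"
  proof
    fix v assume "v \<in> V"
    then have "f v \<in> VS" using bij_betwE[OF bij] by blast
    then obtain i s e where "f v = blk i s e \<and> 1 \<le> i \<and> i \<le> a \<and> 1 \<le> s \<and> s \<le> e \<and> e \<le> b + 1"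
      using row_partD(1)[OF rp] by blast
    then show "\<exists>T. f v = blk (fst T) (fst (snd T)) (snd (snd T)) \<and> 1 \<le> fst T \<and> fst T \<le> a \<and>
          1 \<le> fst (snd T) \<and> fst (snd T) \<le> snd (snd T) \<and> snd (snd T) \<le> b + 1"
      by (intro exI[of _ "(i, s, e)"]) simp
  qed
  then obtain T where T: "\<forall>v\<in>V. f v = blk (fst (T v)) (fst (snd (T v))) (snd (snd (T v))) \<and> 1 \<le> fst (T v) \<and> fst (T v) \<le> a \<and>
          1 \<le> fst (snd (T v)) \<and> fst (snd (T v)) \<le> snd (snd (T v)) \<and> snd (snd (T v)) \<le> b + 1"
    by (metis bchoice)
  define r where "r v = fst (T v)" for v
  define s where "s v = fst (snd (T v))" for v
  define e where "e v = snd (snd (T v))" for v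
  have fv: "\<And>v. v \<in> V \<Longrightarrow> f v = blk (r v) (s v) (e v)"
    and bd: "\<And>v. v \<in> V \<Longrightarrow> 1 \<le> r v \<and> r v \<le> a \<and> 1 \<le> s v \<and> s v \<le> e v \<and> e v \<le> b + 1"
    using T unfolding r_def s_def e_def by auto
  have mem: "\<And>v i c. v \<in> V \<Longrightarrow> (i, c) \<in> f v \<longleftrightarrow> i = r v \<and> s v \<le> c \<and> c \<le> e v"
    using fv by simp
  have uniq: "\<And>u v i c. u \<in> V \<Longrightarrow> v \<in> V \<Longrightarrow> (i, c) \<in> f u \<Longrightarrow> (i, c) \<in> f v \<Longrightarrow> u = v"
  proof -
    fix u v i c assume a: "u \<in> V" "v \<in> V" "(i, c) \<in> f u" "(i, c) \<in> f v"
    have "f u \<in> VS" "f v \<in> VS" using a bij_betwE[OF bij] by auto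
    then have "f u = f v" using row_partD(2)[OF rp] a by blast
    then show "u = v" using bij a unfolding bij_betw_def inj_on_def by blast
  qed
  have cover: "\<And>i c. 1 \<le> i \<Longrightarrow> i \<le> a \<Longrightarrow> 1 \<le> c \<Longrightarrow> c \<le> b + 1 \<Longrightarrow> \<exists>v\<in>V. (i, c) \<in> f v"
  proof -
    fix i c assume "1 \<le> i" "i \<le> a" "1 \<le> c" "c \<le> b + 1"
    then have "(i, c) \<in> \<Union>VS" using row_partD(3)[OF rp] unfolding grid_pos_def by auto
    moreover have "VS = f ` V" using bij unfolding bij_betw_def by auto
    ultimately show "\<exists>v\<in>V. (i, c) \<in> f v" by blast
  qed
  have K1: "\<And>u v. (u, v) \<in> E \<Longrightarrow> s v \<le> e u"
  proof -
    fix u v assume uv: "(u, v) \<in> E"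
    then have V: "u \<in> V" "v \<in> V" using EV by auto
    then have "(f u, f v) \<in> ES" using ed uv by blast
    then have "adj (f u) (f v)" using es unfolding adjE_def by blast
    then obtain i i' c where "(i, c) \<in> f u" "(i', c) \<in> f v" unfolding adj_def by blast
    then show "s v \<le> e u" using mem V by auto
  qed
  define F where "F = {(u, w). u \<in> V \<and> w \<in> V \<and> r w = r u \<and> s w = e u + 1}"
  define B where "B = {v \<in> V. s v = 1}"
  have FV: "F \<subseteq> V \<times> V" and BV: "B \<subseteq> V" unfolding F_def B_def by auto
  have finF: "finite F" using FV finV by (meson finite_SigmaI finite_subset)
  have pred: "\<And>w. w \<in> V \<Longrightarrow> s w \<noteq> 1 \<Longrightarrow> \<exists>u. (u, w) \<in> F"
  proof -
    fix w assume w: "w \<in> V" "s w \<noteq> 1"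
    then have "1 \<le> s w - 1" "s w - 1 \<le> b + 1" using bd[OF w(1)] by auto
    then obtain u where u: "u \<in> V" "(r w, s w - 1) \<in> f u" using cover bd[OF w(1)] by blast
    then have ru: "r u = r w" "s u \<le> s w - 1" "s w - 1 \<le> e u" using mem by auto
    have "e u = s w - 1"
    proof (rule ccontr)
      assume "e u \<noteq> s w - 1"
      then have "(r w, s w) \<in> f u" using ru mem u(1) by auto
      moreover have "(r w, s w) \<in> f w" using mem w bd by auto
      ultimately have "u = w" using uniq u(1) w(1) by blast
      then show False using ru w bd[OF w(1)] by auto
    qed
    then have "(u, w) \<in> F" unfolding F_def using u w ru bd[OF w(1)] by auto
    then show "\<exists>u. (u, w) \<in> F" by blast
  qed
  have Fe: "\<And>u w. (u, w) \<in> F \<Longrightarrow> s w = e u + 1 \<and> u \<in> V \<and> w \<in> V \<and> r w = r u" unfolding F_def by auto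
  have inj1: "inj_on fst F"
  proof (rule inj_onI)
    fix p q assume pq: "p \<in> F" "q \<in> F" "fst p = fst q"
    obtain u w where p: "p = (u, w)" by (cases p)
    obtain u' w' where q: "q = (u', w')" by (cases q)
    have a: "s w = e u + 1" "s w' = e u + 1" "r w = r u" "r w' = r u" "w \<in> V" "w' \<in> V"
      using Fe pq p q by auto
    then have "(r u, e u + 1) \<in> f w" "(r u, e u + 1) \<in> f w'" using mem bd[of w] bd[of w'] by auto
    then have "w = w'" using uniq a by blast
    then show "p = q" using p q pq by simp
  qed
  have inj2: "inj_on snd F"
  proof (rule inj_onI)
    fix p q assume pq: "p \<in> F" "q \<in> F" "snd p = snd q"
    obtain u w where p: "p = (u, w)" by (cases p)
    obtain u' w' where q: "q = (u', w')" by (cases q)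
    have "w' = w" using pq p q by simp
    then have "(u, w) \<in> F" "(u', w) \<in> F" using pq p q by auto
    then have a: "s w = e u + 1" "s w = e u' + 1" "r w = r u" "r w = r u'" "u \<in> V" "u' \<in> V"
      using Fe by blast+
    then have "(r w, e u) \<in> f u" "(r w, e u) \<in> f u'" using mem bd[of u] bd[of u'] by auto
    then have "u = u'" using uniq a by blast
    then show "p = q" using p q pq by simp
  qed
  obtain xs where xs: "set xs = F" "distinct xs" using finite_distinct_list[OF finF] by blast
  define \<kappa> where "\<kappa> p = e (fst p)" for p :: "'a \<times> 'a"
  define fs where "fs = sort_key \<kappa> xs"
  have fs: "set fs = F" "distinct fs" "sorted (map \<kappa> fs)" unfolding fs_def using xs by auto
  have reachb: "\<And>x u. x \<in> V \<Longrightarrow> s x \<le> e u \<Longrightarrow> x \<in> B \<union> {snd q | q. q \<in> set fs \<and> \<kappa> q < e u}"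
  proof -
    fix x u assume x: "x \<in> V" "s x \<le> e u"
    show "x \<in> B \<union> {snd q | q. q \<in> set fs \<and> \<kappa> q < e u}"
    proof (cases "s x = 1")
      case True then show ?thesis using x B_def by auto
    next
      case False
      then obtain u' where u': "(u', x) \<in> F" using pred x by blast
      then have "\<kappa> (u', x) < e u" using Fe[OF u'] x unfolding \<kappa>_def by auto
      then show ?thesis using u' fs(1) by force
    qed
  qed
  have chron: "hop_chron_list V E B fs"
  proof (rule chron_ok[where \<kappa> = \<kappa>])
    show "sorted (map \<kappa> fs)" by (rule fs(3))
    show "distinct (map fst fs)" using fs inj1 by (simp add: distinct_map)
    show "distinct (map snd fs)" using fs inj2 by (simp add: distinct_map)
    show "\<forall>p\<in>set fs. fst p \<in> V \<and> snd p \<in> V \<and> snd p \<notin> B"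
      using Fe fs(1) bd unfolding B_def by fastforce
    show "\<forall>p\<in>set fs. fst p \<in> B \<union> {snd q | q. q \<in> set fs \<and> \<kappa> q < \<kappa> p}"
    proof
      fix p assume p: "p \<in> set fs"
      have "fst p \<in> V" using Fe[of "fst p" "snd p"] fs(1) p by auto
      then have "fst p \<in> V" "s (fst p) \<le> e (fst p)" using bd by auto
      then show "fst p \<in> B \<union> {snd q | q. q \<in> set fs \<and> \<kappa> q < \<kappa> p}" using reachb unfolding \<kappa>_def by blast
    qed
    show "\<forall>p\<in>set fs. nbrs E (fst p) \<subseteq> B \<union> {snd q | q. q \<in> set fs \<and> \<kappa> q < \<kappa> p}"
    proof (intro ballI subsetI)
      fix p x assume p: "p \<in> set fs" and x: "x \<in> nbrs E (fst p)"
      then have "(fst p, x) \<in> E" unfolding nbrs_def by simp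
      then have "x \<in> V" "s x \<le> e (fst p)" using K1 EV by auto
      then show "x \<in> B \<union> {snd q | q. q \<in> set fs \<and> \<kappa> q < \<kappa> p}" using reachb unfolding \<kappa>_def by blast
    qed
    show "B \<union> snd ` set fs = V"
    proof
      show "B \<union> snd ` set fs \<subseteq> V" using BV FV fs(1) by auto
      show "V \<subseteq> B \<union> snd ` set fs"
      proof
        fix v assume v: "v \<in> V"
        show "v \<in> B \<union> snd ` set fs"
        proof (cases "s v = 1")
          case True then show ?thesis using v B_def by auto
        next
          case False then obtain u where "(u, v) \<in> F" using pred v by blast
          then show ?thesis using fs(1) by force
        qed
      qed
    qed
  qed
  have allb: "blue_after B fs (length fs) = V"
  proof -
    have "blue_after B fs (length fs) = B \<union> snd ` F" unfolding blue_after_def using fs(1) by simp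
    also have "\<dots> = V"
    proof
      show "B \<union> snd ` F \<subseteq> V" using BV FV by auto
      show "V \<subseteq> B \<union> snd ` F"
      proof
        fix v assume v: "v \<in> V"
        show "v \<in> B \<union> snd ` F"
        proof (cases "s v = 1")
          case True then show ?thesis using v B_def by auto
        next
          case False then obtain u where "(u, v) \<in> F" using pred v by blast
          then show ?thesis by force
        qed
      qed
    qed
    finally show ?thesis .
  qed
  have layer: "\<forall>v\<in>V. s v \<le> t + 1 \<longrightarrow> v \<in> hop_upto V E B F t" for t
  proof (induction t)
    case 0
    show ?case
    proof (intro ballI impI)
      fix v assume "v \<in> V" "s v \<le> 0 + 1"
      moreover then have "1 \<le> s v" using bd by blast
      ultimately show "v \<in> hop_upto V E B F 0" unfolding B_def by simp
    qed
  next
    case (Suc t)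
    show ?case
    proof (intro ballI impI)
      fix v assume v: "v \<in> V" "s v \<le> Suc t + 1"
      show "v \<in> hop_upto V E B F (Suc t)"
      proof (cases "s v \<le> t + 1")
        case True then show ?thesis using Suc.IH v by auto
      next
        case False
        then have sv: "s v = t + 2" using v by auto
        then obtain u where u: "(u, v) \<in> F" using pred v by fastforce
        have eu: "e u = t + 1" "u \<in> V" using Fe[OF u] sv by auto
        have "u \<in> hop_upto V E B F t" using Suc.IH eu bd[of u] by auto
        moreover have "nbrs E u \<subseteq> hop_upto V E B F t"
        proof
          fix x assume "x \<in> nbrs E u"
          then have "(u, x) \<in> E" unfolding nbrs_def by simp
          then have "x \<in> V" "s x \<le> t + 1" using K1[of u x] EV eu by auto
          then show "x \<in> hop_upto V E B F t" using Suc.IH by auto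
        qed
        ultimately show ?thesis using u by auto
      qed
    qed
  qed
  have "hop_upto V E B F b = V"
  proof
    show "hop_upto V E B F b \<subseteq> V" using hop_upto_sub BV FV by blast
    show "V \<subseteq> hop_upto V E B F b"
    proof
      fix x assume x: "x \<in> V"
      then have "s x \<le> b + 1" using bd[OF x] by linarith
      then show "x \<in> hop_upto V E B F b" using layer[of b] x by blast
    qed
  qed
  then have pt: "pt_H V E B \<le> enat b"
    using pt_le[OF chron allb] ptf_le fs(1) by (metis order_trans)
  have cB: "card B \<le> a"
  proof -
    have "inj_on r B"
    proof (rule inj_onI)
      fix u v assume uv: "u \<in> B" "v \<in> B" "r u = r v"
      then have uv': "u \<in> V" "v \<in> V" "s u = 1" "s v = 1" unfolding B_def by auto
      then have "(r u, 1) \<in> f u" "(r u, 1) \<in> f v" using mem bd[of u] bd[of v] uv(3) by auto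
      then show "u = v" using uniq uv' by blast
    qed
    moreover have "r ` B \<subseteq> {1..a}" using bd unfolding B_def by auto
    ultimately show ?thesis using card_inj_on_le[of r B "{1..a}"] by simp
  qed
  have "th_H V E \<le> enat (card B) + pt_H V E B" using th_le BV by blast
  also have "\<dots> \<le> enat a + enat b" using cB pt by (intro add_mono) auto
  finally show ?thesis by simp
qed



lemma root_uniq:
  assumes "(r, v) \<in> F\<^sup>*" "(r', v) \<in> F\<^sup>*" "r \<notin> snd ` F" "r' \<notin> snd ` F" "inj_on snd F"
  shows "r = r'"
  using assms(1,2,4)
proof (induction arbitrary: r' rule: rtrancl_induct)
  case base
  then show ?case
  proof (cases rule: rtranclE)
    case base then show ?thesis by simp
  next
    case (step y) then have "r \<in> snd ` F" by force
    then show ?thesis using assms(3) by blast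
  qed
next
  case (step y z)
  from step.prems(1) show ?case
  proof (cases rule: rtranclE)
    case base then have "r' \<in> snd ` F" using step.hyps(2) by force
    then show ?thesis using step.prems(2) by blast
  next
    case (step y')
    then have "y' = y" using \<open>(y, z) \<in> F\<close> assms(5) unfolding inj_on_def by force
    then show ?thesis using step.IH step step.prems(2) by blast
  qed
qed

lemma chain_linear:
  assumes "(r, u) \<in> F\<^sup>*" "(r, v) \<in> F\<^sup>*" "inj_on fst F"
  shows "(u, v) \<in> F\<^sup>* \<or> (v, u) \<in> F\<^sup>*"
  using assms(2,1)
proof (induction rule: rtrancl_induct)
  case base
  then show ?case by blast
next
  case (step y v)
  from step.IH step.prems consider "(u, y) \<in> F\<^sup>*" | "(y, u) \<in> F\<^sup>*" by blast
  then show ?case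
  proof cases
    case 1 then show ?thesis using step.hyps(2) by (meson rtrancl.rtrancl_into_rtrancl)
  next
    case 2
    show ?thesis
    proof (cases "y = u")
      case True then show ?thesis using step.hyps(2) by blast
    next
      case False
      then have "(y, u) \<in> F\<^sup>+" using 2 by (simp add: rtrancl_eq_or_trancl)
      then obtain z where z: "(y, z) \<in> F" "(z, u) \<in> F\<^sup>*" by (meson tranclD)
      then have "z = v" using step.hyps(2) assms(3) unfolding inj_on_def by force
      then show ?thesis using z by blast
    qed
  qed
qed

lemma INF_attained:
  fixes g :: "'b \<Rightarrow> enat"
  assumes "finite A" "A \<noteq> {}"
  shows "\<exists>x\<in>A. (INF y\<in>A. g y) = g x"
proof -
  have "Min (g ` A) = Inf (g ` A)" using assms by (intro Min_Inf) auto
  moreover have "Min (g ` A) \<in> g ` A" using assms by (intro Min_in) auto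
  ultimately show ?thesis by auto
qed

lemma grid_structure:
  assumes sg: "simple_graph V E" and Vne: "V \<noteq> {}"
    and BV: "B \<subseteq> V" and FV: "F \<subseteq> V \<times> V" and i1: "inj_on fst F" and i2: "inj_on snd F"
    and FB: "snd ` F \<inter> B = {}"
    and up: "hop_upto V E B F p = V" and le: "card B + p \<le> t"
  shows "\<exists>a b. a \<ge> 1 \<and> a + b = t \<and> (\<exists>VS ES. grid_reach a b VS ES \<and> graph_iso V E VS ES)"
proof -
  have finV: "finite V" and EV: "E \<subseteq> V \<times> V" and symE: "sym E" and irr: "\<And>v. (v, v) \<notin> E"
    using sg unfolding simple_graph_def by auto
  define \<tau> where "\<tau> v = (LEAST n. v \<in> hop_upto V E B F n)" for v
  have tau2: "\<And>v n. v \<in> hop_upto V E B F n \<Longrightarrow> \<tau> v \<le> n" unfolding \<tau>_def by (rule Least_le)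
  have tau1: "\<And>v. v \<in> V \<Longrightarrow> v \<in> hop_upto V E B F (\<tau> v) \<and> \<tau> v \<le> p"
  proof -
    fix v assume "v \<in> V"
    then have "v \<in> hop_upto V E B F p" using up by simp
    then show "v \<in> hop_upto V E B F (\<tau> v) \<and> \<tau> v \<le> p" unfolding \<tau>_def by (meson LeastI Least_le)
  qed
  have predF: "\<And>w. w \<in> V \<Longrightarrow> w \<notin> B \<Longrightarrow> \<exists>u. (u, w) \<in> F \<and> \<tau> u < \<tau> w \<and> (\<forall>x\<in>nbrs E u. \<tau> x < \<tau> w)"
  proof -
    fix w assume w: "w \<in> V" "w \<notin> B"
    have wt: "w \<in> hop_upto V E B F (\<tau> w)" using tau1 w by blast
    have "\<tau> w \<noteq> 0" using wt w by (cases "\<tau> w") auto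
    then obtain n where n: "\<tau> w = Suc n" by (cases "\<tau> w") auto
    have "w \<notin> hop_upto V E B F n" using tau2[of w n] n by auto
    then obtain u where u: "(u, w) \<in> F" "u \<in> hop_upto V E B F n" "nbrs E u \<subseteq> hop_upto V E B F n"
      using wt n by auto
    have "\<tau> u < \<tau> w" using tau2[OF u(2)] n by simp
    moreover have "\<forall>x\<in>nbrs E u. \<tau> x < \<tau> w" using tau2 u(3) n by fastforce
    ultimately show "\<exists>u. (u, w) \<in> F \<and> \<tau> u < \<tau> w \<and> (\<forall>x\<in>nbrs E u. \<tau> x < \<tau> w)" using u by blast
  qed
  have T3: "\<And>u w. (u, w) \<in> F \<Longrightarrow> \<tau> u < \<tau> w \<and> (\<forall>x\<in>nbrs E u. \<tau> x < \<tau> w)"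
  proof -
    fix u w assume uw: "(u, w) \<in> F"
    then have "w \<in> V" "w \<notin> B" using FV FB by force+
    then obtain u' where u': "(u', w) \<in> F" "\<tau> u' < \<tau> w" "\<forall>x\<in>nbrs E u'. \<tau> x < \<tau> w"
      using predF by blast
    have "u' = u" using u' uw i2 unfolding inj_on_def by force
    then show "\<tau> u < \<tau> w \<and> (\<forall>x\<in>nbrs E u. \<tau> x < \<tau> w)" using u' by simp
  qed
  have mono_star: "\<And>u v. (u, v) \<in> F\<^sup>* \<Longrightarrow> \<tau> u \<le> \<tau> v"
  proof -
    fix u v assume "(u, v) \<in> F\<^sup>*"
    then show "\<tau> u \<le> \<tau> v"
      by (induction rule: rtrancl_induct) (auto dest: T3)
  qed
  have star_V: "\<And>u v. (u, v) \<in> F\<^sup>* \<Longrightarrow> u \<in> V \<Longrightarrow> v \<in> V"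
  proof -
    fix u v assume "(u, v) \<in> F\<^sup>*" "u \<in> V"
    then show "v \<in> V" by (induction rule: rtrancl_induct) (use FV in auto)
  qed
  have rootex: "\<And>v. v \<in> V \<Longrightarrow> \<exists>r\<in>B. (r, v) \<in> F\<^sup>*"
  proof -
    fix v assume "v \<in> V"
    then show "\<exists>r\<in>B. (r, v) \<in> F\<^sup>*"
    proof (induction "\<tau> v" arbitrary: v rule: less_induct)
      case less
      show ?case
      proof (cases "v \<in> B")
        case True then show ?thesis by blast
      next
        case False
        then obtain u where u: "(u, v) \<in> F" "\<tau> u < \<tau> v" using predF less.prems by blast
        then have "u \<in> V" using FV by auto
        then obtain r where "r \<in> B" "(r, u) \<in> F\<^sup>*" using less.hyps u(2) by blast
        then show ?thesis using u(1) by (meson rtrancl.rtrancl_into_rtrancl)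
      qed
    qed
  qed
  have Broot: "\<And>r. r \<in> B \<Longrightarrow> r \<notin> snd ` F" using FB by blast
  define rt where "rt v = (THE r. r \<in> B \<and> (r, v) \<in> F\<^sup>*)" for v
  have rt_eq: "\<And>r v. r \<in> B \<Longrightarrow> (r, v) \<in> F\<^sup>* \<Longrightarrow> rt v = r"
  proof -
    fix r v assume r: "r \<in> B" "(r, v) \<in> F\<^sup>*"
    show "rt v = r" unfolding rt_def
    proof (rule the_equality)
      show "r \<in> B \<and> (r, v) \<in> F\<^sup>*" using r by blast
      fix r' assume "r' \<in> B \<and> (r', v) \<in> F\<^sup>*"
      then show "r' = r" using root_uniq[of r' v F r] r Broot i2 by blast
    qed
  qed
  have rt: "\<And>v. v \<in> V \<Longrightarrow> rt v \<in> B \<and> (rt v, v) \<in> F\<^sup>*"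
  proof -
    fix v assume "v \<in> V"
    then obtain r where "r \<in> B" "(r, v) \<in> F\<^sup>*" using rootex by blast
    then show "rt v \<in> B \<and> (rt v, v) \<in> F\<^sup>*" using rt_eq by simp
  qed
  define a where "a = card B"
  define b where "b = t - a"
  have finB: "finite B" using BV finV finite_subset by blast
  have Bne: "B \<noteq> {}"
  proof
    assume "B = {}"
    then have "hop_upto V E B F n = {}" for n by (induction n) auto
    then show False using up Vne by simp
  qed
  have a1: "a \<ge> 1" unfolding a_def using finB Bne by (simp add: Suc_leI card_gt_0_iff)
  have ab: "a + b = t" and pb: "p \<le> b" using le unfolding a_def b_def by auto
  obtain h where h: "bij_betw h B {1..a}"
    using finite_same_card_bij[OF finB, of "{1..a}"] unfolding a_def by auto
  define row where "row v = h (rt v)" for v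
  define e where "e v = (if \<exists>w. (v, w) \<in> F then \<tau> (SOME w. (v, w) \<in> F) else b + 1)" for v
  have e_F: "\<And>v w. (v, w) \<in> F \<Longrightarrow> e v = \<tau> w"
  proof -
    fix v w assume vw: "(v, w) \<in> F"
    then have "(v, SOME w. (v, w) \<in> F) \<in> F" by (meson someI)
    then have "(SOME w. (v, w) \<in> F) = w" using vw i1 unfolding inj_on_def by force
    then show "e v = \<tau> w" using vw unfolding e_def by auto
  qed
  have e_nF: "\<And>v. \<not> (\<exists>w. (v, w) \<in> F) \<Longrightarrow> e v = b + 1" unfolding e_def by auto
  have taub: "\<And>v. v \<in> V \<Longrightarrow> \<tau> v \<le> b" using tau1 pb by force
  define g where "g v = blk (row v) (\<tau> v + 1) (e v)" for v
  have G1: "\<And>v. v \<in> V \<Longrightarrow> 1 \<le> row v \<and> row v \<le> a \<and> \<tau> v + 1 \<le> e v \<and> e v \<le> b + 1"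
  proof -
    fix v assume v: "v \<in> V"
    have "row v \<in> {1..a}" unfolding row_def using rt[OF v] bij_betwE[OF h] by blast
    moreover have "\<tau> v + 1 \<le> e v \<and> e v \<le> b + 1"
    proof (cases "\<exists>w. (v, w) \<in> F")
      case True
      then obtain w where w: "(v, w) \<in> F" by blast
      then have "w \<in> V" using FV by auto
      then show ?thesis using e_F[OF w] T3[OF w] taub by fastforce
    next
      case False then show ?thesis using e_nF taub v by simp
    qed
    ultimately show "1 \<le> row v \<and> row v \<le> a \<and> \<tau> v + 1 \<le> e v \<and> e v \<le> b + 1" by auto
  qed
  have rowinj: "\<And>u v. u \<in> V \<Longrightarrow> v \<in> V \<Longrightarrow> row u = row v \<Longrightarrow> rt u = rt v"
    using rt h unfolding row_def bij_betw_def inj_on_def by blast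
  have sep: "\<And>u v. (u, v) \<in> F\<^sup>* \<Longrightarrow> u \<noteq> v \<Longrightarrow> e u \<le> \<tau> v"
  proof -
    fix u v assume uv: "(u, v) \<in> F\<^sup>*" "u \<noteq> v"
    then have "(u, v) \<in> F\<^sup>+" by (simp add: rtrancl_eq_or_trancl)
    then obtain z where z: "(u, z) \<in> F" "(z, v) \<in> F\<^sup>*" by (meson tranclD)
    then show "e u \<le> \<tau> v" using e_F mono_star by simp
  qed
  have G2: "\<And>u v. u \<in> V \<Longrightarrow> v \<in> V \<Longrightarrow> u \<noteq> v \<Longrightarrow> g u \<inter> g v = {}"
  proof -
    fix u v assume uv: "u \<in> V" "v \<in> V" "u \<noteq> v"
    show "g u \<inter> g v = {}"
    proof (cases "rt u = rt v")
      case False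
      then have "row u \<noteq> row v" using rowinj uv by blast
      then show ?thesis unfolding g_def by auto
    next
      case True
      have "(rt u, u) \<in> F\<^sup>*" "(rt u, v) \<in> F\<^sup>*" using rt[OF uv(1)] rt[OF uv(2)] True by auto
      then consider "(u, v) \<in> F\<^sup>*" | "(v, u) \<in> F\<^sup>*" using chain_linear[OF _ _ i1] by metis
      then show ?thesis
      proof cases
        case 1 then have "e u \<le> \<tau> v" using sep uv by blast
        then show ?thesis unfolding g_def by auto
      next
        case 2 then have "e v \<le> \<tau> u" using sep uv by metis
        then show ?thesis unfolding g_def by auto
      qed
    qed
  qed
  have gne: "\<And>v. v \<in> V \<Longrightarrow> (row v, \<tau> v + 1) \<in> g v" using G1 unfolding g_def by auto
  have ginj: "inj_on g V"
  proof (rule inj_onI)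
    fix u v assume uv: "u \<in> V" "v \<in> V" "g u = g v"
    show "u = v"
    proof (rule ccontr)
      assume "u \<noteq> v"
      then have "g u \<inter> g v = {}" using G2 uv by blast
      then show False using gne[OF uv(1)] uv(3) by auto
    qed
  qed
  have G3: "\<And>i c. 1 \<le> i \<Longrightarrow> i \<le> a \<Longrightarrow> 1 \<le> c \<Longrightarrow> c \<le> b + 1 \<Longrightarrow> \<exists>v\<in>V. (i, c) \<in> g v"
  proof -
    fix i c assume ic: "1 \<le> i" "i \<le> a" "1 \<le> c" "c \<le> b + 1"
    then have "i \<in> h ` B" using bij_betw_imp_surj_on[OF h] by simp
    then obtain r where r: "r \<in> B" "h r = i" by blast
    define C where "C = {v \<in> V. (r, v) \<in> F\<^sup>* \<and> \<tau> v < c}"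
    have rC: "r \<in> C" unfolding C_def using r BV tau2[of r 0] ic(3) by auto
    have finC: "finite C" unfolding C_def using finV by auto
    obtain v where v: "v \<in> C" "\<forall>x\<in>C. \<tau> x \<le> \<tau> v"
      using finC rC by (metis (mono_tags, lifting) Max_ge Max_in emptyE finite_imageI image_iff image_is_empty)
    have vV: "v \<in> V" "(r, v) \<in> F\<^sup>*" "\<tau> v < c" using v unfolding C_def by auto
    have "row v = i" unfolding row_def using rt_eq[OF r(1) vV(2)] r by simp
    moreover have "c \<le> e v"
    proof (cases "\<exists>w. (v, w) \<in> F")
      case True
      then obtain w where w: "(v, w) \<in> F" by blast
      have "c \<le> \<tau> w"
      proof (rule ccontr)
        assume "\<not> c \<le> \<tau> w"
        moreover have "w \<in> V" "(r, w) \<in> F\<^sup>*" using w FV vV(2) by auto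
        ultimately have "w \<in> C" unfolding C_def by auto
        then show False using v(2) T3[OF w] by fastforce
      qed
      then show ?thesis using e_F[OF w] by simp
    next
      case False then show ?thesis using e_nF ic by simp
    qed
    ultimately have "(i, c) \<in> g v" unfolding g_def using vV(3) by auto
    then show "\<exists>v\<in>V. (i, c) \<in> g v" using vV(1) by blast
  qed
  have nbr_e: "\<And>u v. (u, v) \<in> E \<Longrightarrow> \<tau> v + 1 \<le> e u"
  proof -
    fix u v assume uv: "(u, v) \<in> E"
    then have V: "u \<in> V" "v \<in> V" using EV by auto
    show "\<tau> v + 1 \<le> e u"
    proof (cases "\<exists>w. (u, w) \<in> F")
      case True
      then obtain w where w: "(u, w) \<in> F" by blast
      have "v \<in> nbrs E u" using uv unfolding nbrs_def by simp
      then show ?thesis using T3[OF w] e_F[OF w] by fastforce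
    next
      case False then show ?thesis using e_nF taub V by simp
    qed
  qed
  have G4: "\<And>u v. (u, v) \<in> E \<Longrightarrow> adj (g u) (g v)"
  proof -
    fix u v assume uv: "(u, v) \<in> E"
    then have V: "u \<in> V" "v \<in> V" and vu: "(v, u) \<in> E" using EV symE unfolding sym_def by auto
    have "u \<noteq> v" using uv irr by blast
    have "rt u \<noteq> rt v"
    proof
      assume eq: "rt u = rt v"
      have "(rt u, u) \<in> F\<^sup>*" "(rt u, v) \<in> F\<^sup>*" using rt[OF V(1)] rt[OF V(2)] eq by auto
      then consider "(u, v) \<in> F\<^sup>*" | "(v, u) \<in> F\<^sup>*" using chain_linear[OF _ _ i1] by metis
      then show False
      proof cases
        case 1 then have "e u \<le> \<tau> v" using sep \<open>u \<noteq> v\<close> by blast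
        then show False using nbr_e[OF uv] by simp
      next
        case 2 then have "e v \<le> \<tau> u" using sep \<open>u \<noteq> v\<close> by metis
        then show False using nbr_e[OF vu] by simp
      qed
    qed
    then have rr: "row u \<noteq> row v" using rowinj V by blast
    define c where "c = max (\<tau> u) (\<tau> v) + 1"
    have "c \<le> e u" "c \<le> e v" using nbr_e[OF uv] nbr_e[OF vu] G1[OF V(1)] G1[OF V(2)] unfolding c_def by auto
    then have "(row u, c) \<in> g u" "(row v, c) \<in> g v" unfolding g_def c_def by auto
    then show "adj (g u) (g v)" unfolding adj_def using rr by blast
  qed
  define VS where "VS = g ` V"
  define ES where "ES = {(g u, g v) | u v. (u, v) \<in> E}"
  have rp: "row_part a b VS" unfolding row_part_def
  proof (intro conjI)
    show "\<forall>P\<in>VS. \<exists>i s e. P = blk i s e \<and> 1 \<le> i \<and> i \<le> a \<and> 1 \<le> s \<and> s \<le> e \<and> e \<le> b + 1"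
    proof
      fix P assume "P \<in> VS"
      then obtain v where v: "v \<in> V" "P = g v" unfolding VS_def by blast
      have "1 \<le> row v" "row v \<le> a" "1 \<le> \<tau> v + 1" "\<tau> v + 1 \<le> e v" "e v \<le> b + 1" using G1[OF v(1)] by auto
      then show "\<exists>i s e. P = blk i s e \<and> 1 \<le> i \<and> i \<le> a \<and> 1 \<le> s \<and> s \<le> e \<and> e \<le> b + 1"
        unfolding v(2) g_def by blast
    qed
    show "\<forall>P\<in>VS. \<forall>Q\<in>VS. P \<noteq> Q \<longrightarrow> P \<inter> Q = {}" unfolding VS_def using G2 by blast
    show "\<Union>VS = grid_pos a b"
    proof
      show "\<Union>VS \<subseteq> grid_pos a b"
      proof
        fix x assume "x \<in> \<Union>VS"
        then obtain v where v: "v \<in> V" "x \<in> g v" unfolding VS_def by blast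
        then show "x \<in> grid_pos a b" using G1[OF v(1)] unfolding g_def grid_pos_def by (cases x) auto
      qed
      show "grid_pos a b \<subseteq> \<Union>VS"
      proof
        fix x assume "x \<in> grid_pos a b"
        then obtain i c where x: "x = (i, c)" "1 \<le> i" "i \<le> a" "1 \<le> c" "c \<le> b + 1"
          unfolding grid_pos_def by blast
        then show "x \<in> \<Union>VS" using G3 unfolding VS_def by blast
      qed
    qed
  qed
  have ESsub: "ES \<subseteq> adjE VS"
  proof
    fix z assume "z \<in> ES"
    then obtain u v where z: "z = (g u, g v)" "(u, v) \<in> E" unfolding ES_def by blast
    then have V: "u \<in> V" "v \<in> V" "u \<noteq> v" using EV irr by auto
    then have "g u \<noteq> g v" using ginj unfolding inj_on_def by blast
    then show "z \<in> adjE VS" using z V G4 unfolding adjE_def VS_def by blast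
  qed
  have symES: "sym ES" using symE unfolding sym_def ES_def by blast
  have reach: "grid_reach a b VS ES" using reach_del[OF reach_part[OF rp] ESsub symES] .
  have iso: "graph_iso V E VS ES" unfolding graph_iso_def
  proof (intro exI conjI)
    show "bij_betw g V VS" unfolding VS_def using ginj by (simp add: bij_betw_imageI)
    show "\<forall>u\<in>V. \<forall>v\<in>V. (u, v) \<in> E \<longleftrightarrow> (g u, g v) \<in> ES"
    proof (intro ballI iffI)
      fix u v assume "u \<in> V" "v \<in> V" "(u, v) \<in> E"
      then show "(g u, g v) \<in> ES" unfolding ES_def by blast
    next
      fix u v assume uv: "u \<in> V" "v \<in> V" "(g u, g v) \<in> ES"
      then obtain u' v' where "(g u, g v) = (g u', g v')" "(u', v') \<in> E" unfolding ES_def by blast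
      moreover then have "u' \<in> V" "v' \<in> V" using EV by auto
      ultimately have "u = u'" "v = v'" using ginj uv unfolding inj_on_def by auto
      then show "(u, v) \<in> E" using \<open>(u', v') \<in> E\<close> by simp
    qed
  qed
  show ?thesis using a1 ab reach iso by blast
qed



lemma chron_props:
  assumes "hop_chron_list V E B fs"
  shows "set fs \<subseteq> V \<times> V" "distinct (map fst fs)" "distinct (map snd fs)" "snd ` set fs \<inter> B = {}"
proof -
  have ok: "\<And>k. k < length fs \<Longrightarrow> hop_force_ok V E (blue_after B fs k) (fst ` set (take k fs)) (fst (fs!k)) (snd (fs!k))"
    using assms unfolding hop_chron_list_def by blast
  have lt: "\<And>i j. i < j \<Longrightarrow> j < length fs \<Longrightarrow> fst (fs!i) \<noteq> fst (fs!j) \<and> snd (fs!i) \<noteq> snd (fs!j)"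
  proof -
    fix i j assume ij: "i < j" "j < length fs"
    have "take j fs ! i = fs ! i" "i < length (take j fs)" using ij by auto
    then have m: "fs ! i \<in> set (take j fs)" by (metis nth_mem)
    have n1: "fst (fs!j) \<notin> fst ` set (take j fs)" and n2: "snd (fs!j) \<notin> blue_after B fs j"
      using ok[OF ij(2)] unfolding hop_force_ok_def by auto
    have m1: "fst (fs!i) \<in> fst ` set (take j fs)" using m by (rule imageI)
    have m2: "snd (fs!i) \<in> blue_after B fs j" using m unfolding blue_after_def by blast
    show "fst (fs!i) \<noteq> fst (fs!j) \<and> snd (fs!i) \<noteq> snd (fs!j)"
    proof (intro conjI notI)
      assume "fst (fs!i) = fst (fs!j)" then show False using n1 m1 by simp
    next
      assume "snd (fs!i) = snd (fs!j)" then show False using n2 m2 by simp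
    qed
  qed
  show "set fs \<subseteq> V \<times> V"
  proof
    fix x assume "x \<in> set fs"
    then obtain k where "k < length fs" "x = fs ! k" by (auto simp: in_set_conv_nth)
    then show "x \<in> V \<times> V" using ok unfolding hop_force_ok_def by (cases x) fastforce
  qed
  show "distinct (map fst fs)" unfolding distinct_conv_nth
  proof (intro allI impI)
    fix i j assume ij: "i < length (map fst fs)" "j < length (map fst fs)" "i \<noteq> j"
    then consider "i < j" | "j < i" by linarith
    then show "map fst fs ! i \<noteq> map fst fs ! j"
    proof cases
      case 1 then show ?thesis using lt[of i j] ij by simp
    next
      case 2 then show ?thesis using lt[of j i] ij by (simp add: eq_commute)
    qed
  qed
  show "distinct (map snd fs)" unfolding distinct_conv_nth
  proof (intro allI impI)
    fix i j assume ij: "i < length (map snd fs)" "j < length (map snd fs)" "i \<noteq> j"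
    then consider "i < j" | "j < i" by linarith
    then show "map snd fs ! i \<noteq> map snd fs ! j"
    proof cases
      case 1 then show ?thesis using lt[of i j] ij by simp
    next
      case 2 then show ?thesis using lt[of j i] ij by (simp add: eq_commute)
    qed
  qed
  show "snd ` set fs \<inter> B = {}"
  proof -
    have "\<And>k. k < length fs \<Longrightarrow> snd (fs ! k) \<notin> B"
      using ok unfolding hop_force_ok_def blue_after_def by blast
    then have "\<forall>x\<in>set fs. snd x \<notin> B"
    proof -
      assume k: "\<And>k. k < length fs \<Longrightarrow> snd (fs ! k) \<notin> B"
      show "\<forall>x\<in>set fs. snd x \<notin> B"
      proof
        fix x assume "x \<in> set fs"
        then obtain k where "k < length fs" "x = fs ! k" by (auto simp: in_set_conv_nth)
        then show "snd x \<notin> B" using k by simp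
      qed
    qed
    then show ?thesis by blast
  qed
qed

lemma extract_data:
  assumes sg: "simple_graph V E" and th: "th_H V E \<le> enat t"
  shows "\<exists>B F p. B \<subseteq> V \<and> F \<subseteq> V \<times> V \<and> inj_on fst F \<and> inj_on snd F \<and> snd ` F \<inter> B = {} \<and>
           hop_upto V E B F p = V \<and> card B + p \<le> t"
proof -
  have finV: "finite V" using sg unfolding simple_graph_def by auto
  obtain B where B: "B \<in> Pow V" "th_H V E = enat (card B) + pt_H V E B"
    using INF_attained[of "Pow V" "\<lambda>B. enat (card B) + pt_H V E B"] finV unfolding th_H_def by auto
  have le1: "enat (card B) + pt_H V E B \<le> enat t" using B th by simp
  have ptfin: "pt_H V E B \<noteq> \<infinity>"
  proof
    assume "pt_H V E B = \<infinity>" then show False using le1 by simp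
  qed
  have hf: "hop_forcing_set V E B"
  proof (rule ccontr)
    assume "\<not> hop_forcing_set V E B"
    then have "pt_H V E B = \<infinity>" unfolding pt_H_def by simp
    then show False using ptfin by simp
  qed
  define S where "S = {F. hop_set_of_forces V E B F}"
  have SP: "S \<subseteq> Pow (V \<times> V)"
  proof
    fix F assume "F \<in> S"
    then obtain fs where "hop_chron_list V E B fs" "F = set fs" unfolding S_def hop_set_of_forces_def by blast
    then show "F \<in> Pow (V \<times> V)" using chron_props(1) by simp
  qed
  have finS: "finite S" using finite_subset[OF SP] finV by auto
  have Sne: "S \<noteq> {}" using hf unfolding S_def hop_set_of_forces_def hop_forcing_set_def by blast
  obtain F where F: "F \<in> S" "pt_H V E B = pt_H_forces V E B F"
    using INF_attained[OF finS Sne, of "pt_H_forces V E B"] hf unfolding pt_H_def S_def by auto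
  obtain fs where fs: "hop_chron_list V E B fs" "F = set fs" using F(1) unfolding S_def hop_set_of_forces_def by blast
  have "pt_H_forces V E B F \<noteq> \<infinity>" using F ptfin by simp
  then have ex: "\<exists>n. hop_upto V E B F n = V" unfolding pt_H_forces_def by (auto split: if_splits)
  define p where "p = (LEAST n. hop_upto V E B F n = V)"
  have up: "hop_upto V E B F p = V" unfolding p_def using ex by (meson LeastI)
  have "pt_H V E B = enat p" using F ex unfolding pt_H_forces_def p_def by simp
  then have le: "card B + p \<le> t" using le1 by simp
  have "F \<subseteq> V \<times> V" "inj_on fst F" "inj_on snd F" "snd ` F \<inter> B = {}"
    using chron_props[OF fs(1)] fs(2) by (auto simp: distinct_map)
  then show ?thesis using B(1) up le by (intro exI[of _ B] exI[of _ F] exI[of _ p]) auto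
qed

theorem theorem3p14:
  fixes V :: "'a set" and E :: "('a \<times> 'a) set" and t :: nat
  assumes "simple_graph V E" and "V \<noteq> {}" and "t > 0"
  shows "th_H V E \<le> enat t \<longleftrightarrow>
         (\<exists>a b. a \<ge> 1 \<and> a + b = t \<and>
            (\<exists>VS ES. grid_reach a b VS ES \<and> graph_iso V E VS ES))"
proof
  assume th: "th_H V E \<le> enat t"
  obtain B F p where H: "B \<subseteq> V" "F \<subseteq> V \<times> V" "inj_on fst F" "inj_on snd F" "snd ` F \<inter> B = {}"
     "hop_upto V E B F p = V" "card B + p \<le> t"
    using extract_data[OF assms(1) th] by (elim exE conjE)
  show "\<exists>a b. a \<ge> 1 \<and> a + b = t \<and> (\<exists>VS ES. grid_reach a b VS ES \<and> graph_iso V E VS ES)"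
    by (rule grid_structure[OF assms(1,2) H])
next
  assume "\<exists>a b. a \<ge> 1 \<and> a + b = t \<and> (\<exists>VS ES. grid_reach a b VS ES \<and> graph_iso V E VS ES)"
  then obtain a b VS ES where ab: "a + b = t" "grid_reach a b VS ES" "graph_iso V E VS ES" by (elim exE conjE)
  then have rp: "row_part a b VS" and es: "ES \<subseteq> adjE VS" using reach_inv by auto
  have "th_H V E \<le> enat (a + b)" by (rule backward[OF assms(1) rp es ab(3)])
  then show "th_H V E \<le> enat t" using ab(1) by simp
qed


end
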